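(* Let $L\ge2$, $\theta\in\mathbb R$, and with the notation below define, in addition to $|0;i_1,\dots,i_{L-1}\rangle$, the vectors $$|1;i_1,\dots,i_{L-1}\rangle=\begin{cases}{\mathfrak d}_{\mathrm{bd}}^*|0;i_1,\dots,i_{L-1}\rangle,& L+\sum_{j=1}^{L-1}i_j\ \text{even},\\ {\mathfrak d}_{\mathrm{bd}}|0;i_1,\dots,i_{L-1}\rangle,& L+\sum_{j=1}^{L-1}i_j\ \text{odd}.\end{cases}$$ Then $\{|i_{\mathrm{bd}};i_1,\dots,i_{L-1}\rangle: i_{\mathrm{bd}},i_1,\dots,i_{L-1}\in\{0,1\}\}$ is an orthogonal basis of $\mathcal F(\mathbb C^L)$.
   Context: $\mathcal F(\mathbb C^L)$ is the fermionic Fock space with CAR operators ${\mathfrak a}_j$, $j=1,\dots,L$, and vacuum $|\Omega\rangle$. Majorana operators: ${\mathfrak b}_{2j-1}=e^{i\theta/2}{\mathfrak a}_j+e^{-i\theta/2}{\mathfrak a}_j^*$, ${\mathfrak b}_{2j}=-ie^{i\theta/2}{\mathfrak a}_j+ie^{-i\theta/2}{\mathfrak a}_j^*$. Set ${\mathfrak d}_j=\frac12({\mathfrak b}_{2j}+i{\mathfrak b}_{2j+1})$ for $1\le j\le L-1$, ${\mathfrak d}_{\mathrm{bd}}=\frac12({\mathfrak b}_{2L}+i{\mathfrak b}_1)$, ${\mathfrak d}_j^{(0)}={\mathfrak d}_j$, ${\mathfrak d}_j^{(1)}={\mathfrak d}_j^*$, and $|0;i_1,\dots,i_{L-1}\rangle=2^{\frac{L-1}2}{\mathfrak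 d}_1^{(i_1)}\cdots{\mathfrak d}_{L-1}^{(i_{L-1})}|\Omega\rangle$ for $i_j\in\{0,1\}$. *)

theory Defs
  imports Complex_Main
begin

text \<open>Fermionic Fock space over C^L, realised in the occupation-number basis:
  a vector is a function from subsets S of {1..L} (occupied modes) to complex
  coefficients, vanishing outside Pow {1..L}.\<close>

type_synonym fock = "nat set \<Rightarrow> complex"

definition in_fock :: "nat \<Rightarrow> fock \<Rightarrow> bool" where
  "in_fock L f \<longleftrightarrow> (\<forall>S. \<not> S \<subseteq> {1..L} \<longrightarrow> f S = 0)"

definition fock_inner :: "nat \<Rightarrow> fock \<Rightarrow> fock \<Rightarrow> complex" where
  "fock_inner L f g = (\<Sum>S\<in>Pow {1..L}. cnj (f S) * g S)"

definition vac :: fock where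
  "vac = (\<lambda>S. if S = {} then 1 else 0)"

definition jw_sign :: "nat \<Rightarrow> nat set \<Rightarrow> complex" where
  "jw_sign j S = (-1) ^ card {k\<in>S. k < j}"

definition ann :: "nat \<Rightarrow> fock \<Rightarrow> fock" where
  "ann j f = (\<lambda>S. if j \<in> S then 0 else jw_sign j S * f (insert j S))"

definition cre :: "nat \<Rightarrow> fock \<Rightarrow> fock" where
  "cre j f = (\<lambda>S. if j \<in> S then jw_sign j S * f (S - {j}) else 0)"

definition maj :: "real \<Rightarrow> nat \<Rightarrow> fock \<Rightarrow> fock" where
  "maj \<theta> k f =
     (if odd k then
        (\<lambda>S. cis (\<theta>/2) * ann ((k + 1) div 2) f S + cis (-\<theta>/2) * cre ((k + 1) div 2) f S)
      else
        (\<lambda>S. - \<i> * cis (\<theta>/2) * ann (k div 2) f S + \<i> * cis (-\<theta>/2) * cre (k div 2) f S))"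

definition dmode :: "real \<Rightarrow> nat \<Rightarrow> fock \<Rightarrow> fock" where
  "dmode \<theta> j f = (\<lambda>S. (maj \<theta> (2*j) f S + \<i> * maj \<theta> (2*j+1) f S) / 2)"

definition dmode_adj :: "real \<Rightarrow> nat \<Rightarrow> fock \<Rightarrow> fock" where
  "dmode_adj \<theta> j f = (\<lambda>S. (maj \<theta> (2*j) f S - \<i> * maj \<theta> (2*j+1) f S) / 2)"

definition dbd :: "real \<Rightarrow> nat \<Rightarrow> fock \<Rightarrow> fock" where
  "dbd \<theta> L f = (\<lambda>S. (maj \<theta> (2*L) f S + \<i> * maj \<theta> 1 f S) / 2)"

definition dbd_adj :: "real \<Rightarrow> nat \<Rightarrow> fock \<Rightarrow> fock" where
  "dbd_adj \<theta> L f = (\<lambda>S. (maj \<theta> (2*L) f S - \<i> * maj \<theta> 1 f S) / 2)"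

definition dpow :: "real \<Rightarrow> nat \<Rightarrow> nat \<Rightarrow> fock \<Rightarrow> fock" where
  "dpow \<theta> j i = (if i = 0 then dmode \<theta> j else dmode_adj \<theta> j)"

definition ket0 :: "real \<Rightarrow> nat \<Rightarrow> (nat \<Rightarrow> nat) \<Rightarrow> fock" where
  "ket0 \<theta> L i = (\<lambda>S. complex_of_real (2 powr ((real L - 1) / 2)) *
      foldr (\<lambda>j g. dpow \<theta> j (i j) g) [1..<L] vac S)"

definition ket :: "real \<Rightarrow> nat \<Rightarrow> nat \<Rightarrow> (nat \<Rightarrow> nat) \<Rightarrow> fock" where
  "ket \<theta> L ib i =
     (if ib = 0 then ket0 \<theta> L i
      else if even (L + (\<Sum>j\<in>{1..<L}. i j)) then dbd_adj \<theta> L (ket0 \<theta> L i)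
      else dbd \<theta> L (ket0 \<theta> L i))"

definition idx :: "nat \<Rightarrow> (nat \<Rightarrow> nat) set" where
  "idx L = {i. (\<forall>j\<in>{1..<L}. i j \<in> {0,1}) \<and> (\<forall>j. j \<notin> {1..<L} \<longrightarrow> i j = 0)}"

end

theory Submission
  imports Defs "HOL-Library.Function_Algebras"
begin


lemma jw_insert: "m \<notin> S \<Longrightarrow> jw_sign n (insert m S) = (if m < n then -1 else 1) * jw_sign n S"
proof -
  assume m: "m \<notin> S"
  have fin: "finite {k\<in>S. k < n}" by simp
  show ?thesis
  proof (cases "m < n")
    case True
    then have "{k\<in>insert m S. k < n} = insert m {k\<in>S. k < n}" by auto
    then show ?thesis using True m fin by (simp add: jw_sign_def)
  next
    case False
    then have "{k\<in>insert m S. k < n} = {k\<in>S. k < n}" by auto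
    then show ?thesis using False by (simp add: jw_sign_def)
  qed
qed

lemma jw_remove: "m \<in> S \<Longrightarrow> jw_sign n (S - {m}) = (if m < n then -1 else 1) * jw_sign n S"
proof -
  assume m: "m \<in> S"
  have "jw_sign n S = jw_sign n (insert m (S - {m}))" using m by (simp add: insert_absorb)
  also have "\<dots> = (if m < n then -1 else 1) * jw_sign n (S - {m})" by (rule jw_insert) simp
  finally show ?thesis by auto
qed

lemma jw_insert_self: "jw_sign m (insert m S) = jw_sign m S"
  by (cases "m \<in> S") (auto simp: insert_absorb jw_insert)

lemma jw_remove_self: "jw_sign m (S - {m}) = jw_sign m S"
  by (cases "m \<in> S") (auto simp: jw_remove)

lemma jw_sq: "jw_sign n S * jw_sign n S = 1"
  by (simp add: jw_sign_def power_mult_distrib[symmetric] flip: power_add mult_2)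

lemma cnj_jw: "cnj (jw_sign n S) = jw_sign n S"
  by (simp add: jw_sign_def)

lemma car_aa: "ann m (ann n f) S + ann n (ann m f) S = 0"
proof (cases "m = n")
  case True then show ?thesis by (simp add: ann_def)
next
  case False
  show ?thesis
    using False by (auto simp: ann_def jw_insert insert_commute)
qed

lemma car_cc: "cre m (cre n f) S + cre n (cre m f) S = 0"
proof (cases "m = n")
  case True then show ?thesis by (simp add: cre_def)
next
  case False
  show ?thesis
    using False by (auto simp: cre_def jw_remove Diff_insert2[symmetric] insert_commute)
qed

lemma car_ac: "ann m (cre n f) S + cre n (ann m f) S = (if m = n then f S else 0)"
proof (cases "m = n")
  case True then show ?thesis
    by (auto simp: ann_def cre_def jw_insert_self jw_remove_self jw_sq insert_absorb)
next
  case False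
  have e: "insert m S - {n} = insert m (S - {n})" using False by auto
  show ?thesis
    using False by (auto simp: ann_def cre_def jw_insert jw_remove e)
qed

definition sop :: "complex \<Rightarrow> complex \<Rightarrow> nat \<Rightarrow> fock \<Rightarrow> fock" where
  "sop \<alpha> \<beta> m f = (\<lambda>S. \<alpha> * ann m f S + \<beta> * cre m f S)"

lemma ann_lin: "ann m (\<lambda>T. a * f T + b * g T) S = a * ann m f S + b * ann m g S"
  by (simp add: ann_def algebra_simps)
lemma cre_lin: "cre m (\<lambda>T. a * f T + b * g T) S = a * cre m f S + b * cre m g S"
  by (simp add: cre_def algebra_simps)

lemma sop_anti: "sop \<alpha> \<beta> m (sop \<gamma> \<delta> n f) S + sop \<gamma> \<delta> n (sop \<alpha> \<beta> m f) S
   = (if m = n then (\<alpha> * \<delta> + \<beta> * \<gamma>) * f S else 0)"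
proof -
  have "sop \<alpha> \<beta> m (sop \<gamma> \<delta> n f) S + sop \<gamma> \<delta> n (sop \<alpha> \<beta> m f) S
    = \<alpha> * \<gamma> * (ann m (ann n f) S + ann n (ann m f) S)
    + \<alpha> * \<delta> * (ann m (cre n f) S + cre n (ann m f) S)
    + \<beta> * \<gamma> * (ann n (cre m f) S + cre m (ann n f) S)
    + \<beta> * \<delta> * (cre m (cre n f) S + cre n (cre m f) S)"
    unfolding sop_def ann_lin cre_lin by (simp add: algebra_simps)
  then show ?thesis by (simp add: car_aa car_cc car_ac distrib_right)
qed

lemma sop_lin: "sop \<alpha> \<beta> m (\<lambda>T. a * f T + b * g T) S = a * sop \<alpha> \<beta> m f S + b * sop \<alpha> \<beta> m g S"
  unfolding sop_def ann_lin cre_lin by (simp add: algebra_simps)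

lemma maj_sop: "maj \<theta> k = (if odd k then sop (cis (\<theta>/2)) (cis (-\<theta>/2)) ((k+1) div 2)
   else sop (- \<i> * cis (\<theta>/2)) (\<i> * cis (-\<theta>/2)) (k div 2))"
  by (auto simp: maj_def sop_def fun_eq_iff)


lemma maj_anti: "k \<ge> 1 \<Longrightarrow> l \<ge> 1 \<Longrightarrow>
   maj \<theta> k (maj \<theta> l f) S + maj \<theta> l (maj \<theta> k f) S = (if k = l then 2 * f S else 0)"
  apply (simp add: maj_sop sop_anti)
  apply (auto simp: cis_mult algebra_simps)
  apply presburger+
  done



lemma inner_ann: assumes m: "m \<in> {1..L}"
  shows "fock_inner L f (ann m g) = fock_inner L (cre m f) g"
proof -
  let ?A = "{S\<in>Pow {1..L}. m \<notin> S}" and ?B = "{S\<in>Pow {1..L}. m \<in> S}"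
  have "fock_inner L f (ann m g) = (\<Sum>S\<in>Pow {1..L}. if m \<notin> S then cnj (f S) * (jw_sign m S * g (insert m S)) else 0)"
    unfolding fock_inner_def ann_def by (intro sum.cong) auto
  also have "\<dots> = (\<Sum>S\<in>?A. cnj (f S) * (jw_sign m S * g (insert m S)))"
    by (rule sum.inter_filter[symmetric]) simp
  also have "\<dots> = (\<Sum>T\<in>?B. cnj (jw_sign m T * f (T - {m})) * g T)"
  proof (rule sum.reindex_bij_witness[of _ "\<lambda>T. T - {m}" "insert m"])
    show "\<And>a. a \<in> ?B \<Longrightarrow> insert m (a - {m}) = a" by auto
    show "\<And>a. a \<in> ?B \<Longrightarrow> a - {m} \<in> ?A" by auto
    show "\<And>a. a \<in> ?A \<Longrightarrow> insert m a - {m} = a" by auto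
    show "\<And>a. a \<in> ?A \<Longrightarrow> insert m a \<in> ?B" using m by auto
    show "\<And>a. a \<in> ?A \<Longrightarrow> cnj (jw_sign m (insert m a) * f (insert m a - {m})) * g (insert m a) =
         cnj (f a) * (jw_sign m a * g (insert m a))"
      by (auto simp: jw_insert_self cnj_jw)
  qed
  also have "\<dots> = (\<Sum>T\<in>Pow {1..L}. if m \<in> T then cnj (jw_sign m T * f (T - {m})) * g T else 0)"
    by (rule sum.inter_filter) simp
  also have "\<dots> = fock_inner L (cre m f) g"
    unfolding fock_inner_def cre_def by (intro sum.cong) auto
  finally show ?thesis .
qed

lemma inner_cre: assumes m: "m \<in> {1..L}"
  shows "fock_inner L f (cre m g) = fock_inner L (ann m f) g"
proof -
  have "fock_inner L f (cre m g) = cnj (fock_inner L (cre m g) f)"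
    unfolding fock_inner_def by (simp add: mult.commute)
  also have "\<dots> = cnj (fock_inner L g (ann m f))" using inner_ann[OF m] by simp
  also have "\<dots> = fock_inner L (ann m f) g"
    unfolding fock_inner_def by (simp add: mult.commute)
  finally show ?thesis .
qed

lemma inner_lin_r: "fock_inner L f (\<lambda>S. a * g S + b * h S) = a * fock_inner L f g + b * fock_inner L f h"
  unfolding fock_inner_def by (simp add: sum_distrib_left sum.distrib algebra_simps)

lemma inner_lin_l: "fock_inner L (\<lambda>S. a * g S + b * h S) f = cnj a * fock_inner L g f + cnj b * fock_inner L h f"
  unfolding fock_inner_def by (simp add: sum_distrib_left sum.distrib algebra_simps)

lemma inner_sop: assumes m: "m \<in> {1..L}"
  shows "fock_inner L f (sop \<alpha> \<beta> m g) = fock_inner L (sop (cnj \<beta>) (cnj \<alpha>) m f) g"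
  unfolding sop_def inner_lin_r inner_lin_l inner_ann[OF m] inner_cre[OF m] by simp

lemma inner_maj: assumes k: "1 \<le> k" "k \<le> 2 * L"
  shows "fock_inner L f (maj \<theta> k g) = fock_inner L (maj \<theta> k f) g"
proof -
  have m1: "(k+1) div 2 \<in> {1..L}" if "odd k" using k that by (auto; presburger)
  have m2: "k div 2 \<in> {1..L}" if "\<not> odd k" using k that by auto
  show ?thesis
  proof (cases "odd k")
    case True
    then show ?thesis unfolding maj_sop using inner_sop[OF m1[OF True]] by (simp add: cis_cnj)
  next
    case False
    then show ?thesis unfolding maj_sop using inner_sop[OF m2[OF False]] by (simp add: cis_cnj)
  qed
qed



lemma maj_lin: "maj \<theta> k (\<lambda>T. a * f T + b * g T) S = a * maj \<theta> k f S + b * maj \<theta> k g S"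
  by (simp add: maj_sop sop_lin)

lemma maj_scale: "maj \<theta> k (\<lambda>T. a * f T) S = a * maj \<theta> k f S"
  using maj_lin[of \<theta> k a f 0 f S] by simp

definition dgen :: "real \<Rightarrow> nat \<Rightarrow> nat \<Rightarrow> real \<Rightarrow> fock \<Rightarrow> fock" where
  "dgen \<theta> p q \<epsilon> f = (\<lambda>S. (1/2) * maj \<theta> p f S + (of_real \<epsilon> * \<i> / 2) * maj \<theta> q f S)"

lemma dgen_lin: "dgen \<theta> p q \<epsilon> (\<lambda>T. a * f T + b * g T) S = a * dgen \<theta> p q \<epsilon> f S + b * dgen \<theta> p q \<epsilon> g S"
  unfolding dgen_def maj_lin by (simp add: algebra_simps)

lemma dgen_scale: "dgen \<theta> p q \<epsilon> (\<lambda>T. a * f T) = (\<lambda>S. a * dgen \<theta> p q \<epsilon> f S)"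
  unfolding dgen_def maj_scale by (simp add: algebra_simps fun_eq_iff)

lemma dgen_anti:
  assumes "p \<ge> 1" "q \<ge> 1" "p' \<ge> 1" "q' \<ge> 1" "p \<noteq> p'" "p \<noteq> q'" "q \<noteq> p'" "q \<noteq> q'"
  shows "dgen \<theta> p q \<epsilon> (dgen \<theta> p' q' \<epsilon>' f) = (\<lambda>S. - dgen \<theta> p' q' \<epsilon>' (dgen \<theta> p q \<epsilon> f) S)"
proof
  fix S
  let ?a = "of_real \<epsilon> * \<i> / 2" and ?b = "of_real \<epsilon>' * \<i> / 2"
  have "dgen \<theta> p q \<epsilon> (dgen \<theta> p' q' \<epsilon>' f) S + dgen \<theta> p' q' \<epsilon>' (dgen \<theta> p q \<epsilon> f) S
    = (1/4) * (maj \<theta> p (maj \<theta> p' f) S + maj \<theta> p' (maj \<theta> p f) S)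
    + (1/2) * ?b * (maj \<theta> p (maj \<theta> q' f) S + maj \<theta> q' (maj \<theta> p f) S)
    + ?a * (1/2) * (maj \<theta> q (maj \<theta> p' f) S + maj \<theta> p' (maj \<theta> q f) S)
    + ?a * ?b * (maj \<theta> q (maj \<theta> q' f) S + maj \<theta> q' (maj \<theta> q f) S)"
    unfolding dgen_def maj_lin by (simp add: algebra_simps)
  also have "\<dots> = 0" using assms by (simp add: maj_anti)
  finally show "dgen \<theta> p q \<epsilon> (dgen \<theta> p' q' \<epsilon>' f) S = - dgen \<theta> p' q' \<epsilon>' (dgen \<theta> p q \<epsilon> f) S"
    by (simp add: eq_neg_iff_add_eq_0)
qed

lemma dgen_nil:
  assumes "p \<ge> 1" "q \<ge> 1" "p \<noteq> q" "\<epsilon> * \<epsilon> = 1"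
  shows "dgen \<theta> p q \<epsilon> (dgen \<theta> p q \<epsilon> f) S = 0"
proof -
  let ?a = "of_real \<epsilon> * \<i> / 2"
  have "2 * dgen \<theta> p q \<epsilon> (dgen \<theta> p q \<epsilon> f) S
    = (1/4) * (maj \<theta> p (maj \<theta> p f) S + maj \<theta> p (maj \<theta> p f) S)
    + (1/2) * ?a * (maj \<theta> p (maj \<theta> q f) S + maj \<theta> q (maj \<theta> p f) S)
    + ?a * (1/2) * (maj \<theta> q (maj \<theta> p f) S + maj \<theta> p (maj \<theta> q f) S)
    + ?a * ?a * (maj \<theta> q (maj \<theta> q f) S + maj \<theta> q (maj \<theta> q f) S)"
    unfolding dgen_def maj_lin by (simp add: algebra_simps)
  also have "\<dots> = (1/2) * f S + (of_real (\<epsilon> * \<epsilon>)) * (\<i> * \<i>) / 2 * f S"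
    using assms(1-3) by (simp add: maj_anti algebra_simps)
  also have "\<dots> = 0" using assms(4) by simp
  finally show ?thesis by simp
qed

lemma inner_dgen: assumes "1 \<le> p" "p \<le> 2 * L" "1 \<le> q" "q \<le> 2 * L"
  shows "fock_inner L f (dgen \<theta> p q \<epsilon> g) = fock_inner L (dgen \<theta> p q (-\<epsilon>) f) g"
  unfolding dgen_def inner_lin_r inner_lin_l inner_maj[OF assms(1,2)] inner_maj[OF assms(3,4)]
  by simp



definition eps :: "nat \<Rightarrow> real" where "eps x = (if x = 0 then 1 else -1)"

lemma dpow_dgen: "dpow \<theta> j x = dgen \<theta> (2*j) (2*j+1) (eps x)"
  by (auto simp: dpow_def dmode_def dmode_adj_def dgen_def eps_def fun_eq_iff field_simps)

lemma dbd_dgen: "dbd \<theta> L = dgen \<theta> (2*L) 1 1"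
  by (auto simp: dbd_def dgen_def fun_eq_iff field_simps)

lemma dbd_adj_dgen: "dbd_adj \<theta> L = dgen \<theta> (2*L) 1 (-1)"
  by (auto simp: dbd_adj_def dgen_def fun_eq_iff field_simps)

definition mmode :: "nat \<Rightarrow> nat" where "mmode k = (if odd k then (k+1) div 2 else k div 2)"

lemma maj_nz: "maj \<theta> k g S \<noteq> 0 \<Longrightarrow>
   (mmode k \<notin> S \<and> g (insert (mmode k) S) \<noteq> 0) \<or> (mmode k \<in> S \<and> g (S - {mmode k}) \<noteq> 0)"
proof -
  assume h: "maj \<theta> k g S \<noteq> 0"
  define m where "m = mmode k"
  have "maj \<theta> k g S = (if odd k then cis (\<theta>/2) * ann m g S + cis (-\<theta>/2) * cre m g S
     else - \<i> * cis (\<theta>/2) * ann m g S + \<i> * cis (-\<theta>/2) * cre m g S)"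
    by (simp add: maj_def m_def mmode_def)
  then have "ann m g S \<noteq> 0 \<or> cre m g S \<noteq> 0" using h by (auto split: if_splits)
  then show ?thesis unfolding m_def[symmetric] by (auto simp: ann_def cre_def split: if_splits)
qed

lemma dgen_nz: "dgen \<theta> p q \<epsilon> g S \<noteq> 0 \<Longrightarrow> maj \<theta> p g S \<noteq> 0 \<or> maj \<theta> q g S \<noteq> 0"
  by (rule ccontr) (simp add: dgen_def)

lemma mode_2j[simp]: "mmode (2*j) = j" and mode_2j1[simp]: "mmode (Suc (2*j)) = Suc j" and mode_1[simp]: "mmode 1 = 1"
  by (auto simp: mmode_def)

definition Wv :: "real \<Rightarrow> nat \<Rightarrow> (nat \<Rightarrow> nat) \<Rightarrow> nat \<Rightarrow> fock" where
  "Wv \<theta> L i j = foldr (\<lambda>j g. dpow \<theta> j (i j) g) [j..<L] vac"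

lemma Wv_L: "Wv \<theta> L i L = vac"
  by (simp add: Wv_def)

lemma Wv_step: "j < L \<Longrightarrow> Wv \<theta> L i j = dgen \<theta> (2*j) (2*j+1) (eps (i j)) (Wv \<theta> L i (Suc j))"
  by (simp add: Wv_def upt_conv_Cons dpow_dgen)

lemma ket0_Wv: "ket0 \<theta> L i = (\<lambda>S. complex_of_real (2 powr ((real L - 1) / 2)) * Wv \<theta> L i 1 S)"
  by (simp add: ket0_def Wv_def)

lemma step_par:
  assumes IH: "\<And>T. g T \<noteq> 0 \<Longrightarrow> T \<subseteq> A \<and> even (card T + r)"
    and m: "m \<in> B" and AB: "A \<subseteq> B" and fin: "finite A"
    and nz: "(m \<notin> S \<and> g (insert m S) \<noteq> 0) \<or> (m \<in> S \<and> g (S - {m}) \<noteq> 0)"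
  shows "S \<subseteq> B \<and> odd (card S + r)"
  using nz
proof
  assume h: "m \<notin> S \<and> g (insert m S) \<noteq> 0"
  then have s: "insert m S \<subseteq> A" and e: "even (card (insert m S) + r)" using IH[of "insert m S"] by auto
  have fS: "finite S" using finite_subset[OF s fin] by simp
  have "card (insert m S) = Suc (card S)" using h fS by simp
  then have "odd (card S + r)" using e by simp
  moreover have "S \<subseteq> B" using s AB by blast
  ultimately show ?thesis by blast
next
  assume h: "m \<in> S \<and> g (S - {m}) \<noteq> 0"
  then have s: "S - {m} \<subseteq> A" and e: "even (card (S - {m}) + r)" using IH[of "S - {m}"] by auto
  have fS: "finite S" using finite_subset[OF s fin] by simp
  have "card S = Suc (card (S - {m}))" using h fS by (metis card_Suc_Diff1)
  then have "odd (card S + r)" using e by simp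
  moreover have "S \<subseteq> B" using s AB m h by blast
  ultimately show ?thesis by blast
qed

lemma Wv_supp: "1 \<le> j \<Longrightarrow> j \<le> L \<Longrightarrow> Wv \<theta> L i j S \<noteq> 0 \<Longrightarrow> S \<subseteq> {j..L} \<and> even (card S + (L - j))"
proof (induction "L - j" arbitrary: j S)
  case 0
  then have "j = L" by simp
  then show ?case using 0 by (simp add: Wv_L vac_def split: if_splits)
next
  case (Suc n)
  then have jL: "j < L" by simp
  have nn: "n = L - Suc j" using Suc.hyps(2) by simp
  have IH: "\<And>T. Wv \<theta> L i (Suc j) T \<noteq> 0 \<Longrightarrow> T \<subseteq> {Suc j..L} \<and> even (card T + (L - Suc j))"
    using Suc.hyps(1)[OF nn] jL by simp
  have "Wv \<theta> L i j S = dgen \<theta> (2*j) (2*j+1) (eps (i j)) (Wv \<theta> L i (Suc j)) S"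
    using Wv_step[OF jL] by simp
  then have "maj \<theta> (2*j) (Wv \<theta> L i (Suc j)) S \<noteq> 0 \<or> maj \<theta> (2*j+1) (Wv \<theta> L i (Suc j)) S \<noteq> 0"
    using Suc.prems dgen_nz by metis
  then have "S \<subseteq> {j..L} \<and> odd (card S + (L - Suc j))"
  proof
    assume "maj \<theta> (2*j) (Wv \<theta> L i (Suc j)) S \<noteq> 0"
    from maj_nz[OF this] show ?thesis
      by (intro step_par[OF IH, where m=j]) (use jL in auto)
  next
    assume "maj \<theta> (2*j+1) (Wv \<theta> L i (Suc j)) S \<noteq> 0"
    from maj_nz[OF this] show ?thesis
      by (intro step_par[OF IH, where m="j+1"]) (use jL in auto)
  qed
  moreover have "L - j = Suc (L - Suc j)" using jL by simp
  ultimately show ?case by simp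
qed



lemma dstep:
  assumes g: "\<And>T. j \<in> T \<Longrightarrow> g T = 0"
  shows "dgen \<theta> (2*j) (2*j+1) \<epsilon> g S = (if j \<in> S then \<i>/2 * cis(-\<theta>/2) * jw_sign j S * g (S - {j})
     else of_real \<epsilon> * \<i>/2 * (cis(\<theta>/2) * ann (j+1) g S + cis(-\<theta>/2) * cre (j+1) g S))"
proof -
  have a: "maj \<theta> (2*j) g S = - \<i> * cis (\<theta>/2) * ann j g S + \<i> * cis (-\<theta>/2) * cre j g S"
    by (simp add: maj_def)
  have b: "maj \<theta> (2*j+1) g S = cis (\<theta>/2) * ann (j+1) g S + cis (-\<theta>/2) * cre (j+1) g S"
    by (simp add: maj_def)
  show ?thesis
  proof (cases "j \<in> S")
    case True
    have "ann (j+1) g S = 0" using True g by (simp add: ann_def)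
    moreover have "cre (j+1) g S = 0" using True g by (simp add: cre_def)
    moreover have "ann j g S = 0" using True by (simp add: ann_def)
    moreover have "cre j g S = jw_sign j S * g (S - {j})" using True by (simp add: cre_def)
    ultimately show ?thesis using True unfolding dgen_def a b by simp
  next
    case False
    have "ann j g S = 0" using False g by (simp add: ann_def)
    moreover have "cre j g S = 0" using False by (simp add: cre_def)
    ultimately show ?thesis using False unfolding dgen_def a b by (simp add: algebra_simps)
  qed
qed

lemma Wv_low: "1 \<le> j \<Longrightarrow> j \<le> L \<Longrightarrow> k \<in> T \<Longrightarrow> k < j \<Longrightarrow> Wv \<theta> L i j T = 0"
  using Wv_supp[of j L \<theta> i T] by fastforce

lemma pow_step: "j < L \<Longrightarrow> (x::complex)^(L-j) = x * x^(L - Suc j)"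
  by (metis Suc_diff_Suc power_Suc)

lemma Wv_val1: "1 \<le> j \<Longrightarrow> j \<le> L \<Longrightarrow> Wv \<theta> L i j {j..<L} = (\<i>/2 * cis(-\<theta>/2))^(L-j)"
proof (induction "L - j" arbitrary: j)
  case 0
  then have "j = L" by simp
  then show ?case by (simp add: Wv_L vac_def)
next
  case (Suc n)
  then have jL: "j < L" by simp
  have nn: "n = L - Suc j" using Suc.hyps(2) by simp
  have IH: "Wv \<theta> L i (Suc j) {Suc j..<L} = (\<i>/2 * cis(-\<theta>/2))^(L - Suc j)"
    using Suc.hyps(1)[OF nn] jL by simp
  have z: "\<And>T. j \<in> T \<Longrightarrow> Wv \<theta> L i (Suc j) T = 0"
    using Wv_low[of "Suc j" L] jL by simp
  have jw: "jw_sign j {j..<L} = 1"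
  proof -
    have "{k\<in>{j..<L}. k < j} = {}" by auto
    then show ?thesis unfolding jw_sign_def by (metis card.empty power_0)
  qed
  have d: "{j..<L} - {j} = {Suc j..<L}" by auto
  have "Wv \<theta> L i j {j..<L} = dgen \<theta> (2*j) (2*j+1) (eps (i j)) (Wv \<theta> L i (Suc j)) {j..<L}"
    using Wv_step[OF jL] by simp
  also have "\<dots> = \<i>/2 * cis(-\<theta>/2) * Wv \<theta> L i (Suc j) {Suc j..<L}"
    using dstep[OF z, where \<theta>=\<theta> and \<epsilon>="eps (i j)" and S="{j..<L}"] jL jw d by simp
  also have "\<dots> = (\<i>/2 * cis(-\<theta>/2))^(L-j)"
    unfolding IH pow_step[OF jL] by simp
  finally show ?case .
qed

lemma Wv_val2: "1 \<le> j \<Longrightarrow> j \<le> L \<Longrightarrow> Wv \<theta> L i j {Suc j..L} =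
   (\<i>/2 * cis(-\<theta>/2))^(L-j) * (\<Prod>k\<in>{j..<L}. complex_of_real (eps (i k)))"
proof (induction "L - j" arbitrary: j)
  case 0
  then have "j = L" by simp
  then show ?case by (simp add: Wv_L vac_def)
next
  case (Suc n)
  then have jL: "j < L" by simp
  have nn: "n = L - Suc j" using Suc.hyps(2) by simp
  have IH: "Wv \<theta> L i (Suc j) {Suc (Suc j)..L} = (\<i>/2 * cis(-\<theta>/2))^(L - Suc j) *
     (\<Prod>k\<in>{Suc j..<L}. complex_of_real (eps (i k)))"
    using Suc.hyps(1)[OF nn] jL by simp
  have z: "\<And>T. j \<in> T \<Longrightarrow> Wv \<theta> L i (Suc j) T = 0"
    using Wv_low[of "Suc j" L] jL by simp
  have jw: "jw_sign (Suc j) {Suc j..L} = 1"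
  proof -
    have "{k\<in>{Suc j..L}. k < Suc j} = {}" by auto
    then show ?thesis unfolding jw_sign_def by (metis card.empty power_0)
  qed
  have d: "{Suc j..L} - {Suc j} = {Suc (Suc j)..L}" by auto
  have "ann (j+1) (Wv \<theta> L i (Suc j)) {Suc j..L} = 0" using jL by (simp add: ann_def)
  moreover have "cre (j+1) (Wv \<theta> L i (Suc j)) {Suc j..L} = Wv \<theta> L i (Suc j) {Suc (Suc j)..L}"
    using jL jw d by (simp add: cre_def)
  ultimately have "dgen \<theta> (2*j) (2*j+1) (eps (i j)) (Wv \<theta> L i (Suc j)) {Suc j..L} = of_real (eps (i j)) * \<i>/2 * cis(-\<theta>/2) * Wv \<theta> L i (Suc j) {Suc (Suc j)..L}"
    using dstep[OF z, where \<theta>=\<theta> and \<epsilon>="eps (i j)" and S="{Suc j..L}"] by simp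
  then have "Wv \<theta> L i j {Suc j..L} = of_real (eps (i j)) * \<i>/2 * cis(-\<theta>/2) * Wv \<theta> L i (Suc j) {Suc (Suc j)..L}"
    using Wv_step[OF jL] by simp
  also have "\<dots> = (\<i>/2 * cis(-\<theta>/2))^(L-j) * (\<Prod>k\<in>{j..<L}. complex_of_real (eps (i k)))"
    unfolding IH pow_step[OF jL] prod.atLeast_Suc_lessThan[OF jL] by simp
  finally show ?case .
qed



definition epsb :: "nat \<Rightarrow> (nat \<Rightarrow> nat) \<Rightarrow> real" where
  "epsb L i = (if even (L + (\<Sum>j\<in>{1..<L}. i j)) then -1 else 1)"

lemma ket1_dgen: "p \<noteq> 0 \<Longrightarrow> ket \<theta> L p i = dgen \<theta> (2*L) 1 (epsb L i) (ket0 \<theta> L i)"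
  by (simp add: ket_def epsb_def dbd_dgen dbd_adj_dgen)

lemma ket0_eq: "p = 0 \<Longrightarrow> ket \<theta> L p i = ket0 \<theta> L i"
  by (simp add: ket_def)

lemma ket0_supp: assumes L: "L \<ge> 1" and nz: "ket0 \<theta> L i S \<noteq> 0"
  shows "S \<subseteq> {1..L} \<and> even (card S + (L - 1))"
proof -
  have "Wv \<theta> L i 1 S \<noteq> 0" using nz by (simp add: ket0_Wv)
  then show ?thesis using Wv_supp[of 1 L \<theta> i S] L by simp
qed

lemma ket1_supp: assumes L: "L \<ge> 1" and p: "p \<noteq> 0" and nz: "ket \<theta> L p i S \<noteq> 0"
  shows "S \<subseteq> {1..L} \<and> odd (card S + (L - 1))"
proof -
  have IH: "\<And>T. ket0 \<theta> L i T \<noteq> 0 \<Longrightarrow> T \<subseteq> {1..L} \<and> even (card T + (L - 1))"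
    using ket0_supp[OF L] by blast
  have "maj \<theta> (2*L) (ket0 \<theta> L i) S \<noteq> 0 \<or> maj \<theta> 1 (ket0 \<theta> L i) S \<noteq> 0"
    using nz dgen_nz unfolding ket1_dgen[OF p] by metis
  then show ?thesis
  proof
    assume "maj \<theta> (2*L) (ket0 \<theta> L i) S \<noteq> 0"
    from maj_nz[OF this] show ?thesis
      by (intro step_par[OF IH, where m=L]) (use L in auto)
  next
    assume "maj \<theta> 1 (ket0 \<theta> L i) S \<noteq> 0"
    from maj_nz[OF this] show ?thesis
      by (intro step_par[OF IH, where m=1]) (use L in \<open>auto simp: mmode_def\<close>)
  qed
qed

lemma ket_supp: assumes L: "L \<ge> 1" and nz: "ket \<theta> L p i S \<noteq> 0"
  shows "S \<subseteq> {1..L} \<and> (even (card S + (L - 1)) \<longleftrightarrow> p = 0)"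
proof (cases "p = 0")
  case True
  then show ?thesis using ket0_supp[OF L] nz by (simp add: ket0_eq)
next
  case False
  then show ?thesis using ket1_supp[OF L False nz] by simp
qed

lemma ket_in_fock: "L \<ge> 1 \<Longrightarrow> in_fock L (ket \<theta> L p i)"
  unfolding in_fock_def using ket_supp by blast

lemma inner_par: assumes L: "L \<ge> 1" and pq: "p = 0 \<longleftrightarrow> q \<noteq> 0"
  shows "fock_inner L (ket \<theta> L p i) (ket \<theta> L q i') = 0"
  unfolding fock_inner_def
proof (rule sum.neutral, rule ballI)
  fix S assume "S \<in> Pow {1..L}"
  show "cnj (ket \<theta> L p i S) * ket \<theta> L q i' S = 0"
  proof (rule ccontr)
    assume "cnj (ket \<theta> L p i S) * ket \<theta> L q i' S \<noteq> 0"
    then have "ket \<theta> L p i S \<noteq> 0" "ket \<theta> L q i' S \<noteq> 0" by auto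
    from ket_supp[OF L this(1)] ket_supp[OF L this(2)] pq show False by blast
  qed
qed

lemma c0_nz: "complex_of_real (2 powr ((real L - 1) / 2)) \<noteq> 0"
  by simp

lemma K_nz: "(\<i>/2 * cis(-\<theta>/2))^n \<noteq> 0"
  by simp

lemma ket0_val: "L \<ge> 1 \<Longrightarrow> ket0 \<theta> L i {1..<L} =
   complex_of_real (2 powr ((real L - 1) / 2)) * (\<i>/2 * cis(-\<theta>/2))^(L-1)"
  unfolding ket0_Wv using Wv_val1[of 1 L \<theta> i] by simp

lemma ket0_val2: "L \<ge> 1 \<Longrightarrow> ket0 \<theta> L i {2..L} =
   complex_of_real (2 powr ((real L - 1) / 2)) * (\<i>/2 * cis(-\<theta>/2))^(L-1) *
   (\<Prod>k\<in>{1..<L}. complex_of_real (eps (i k)))"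
  unfolding ket0_Wv using Wv_val2[of 1 L \<theta> i] by (simp add: numeral_2_eq_2)

lemma ket0_nz: "L \<ge> 1 \<Longrightarrow> ket0 \<theta> L i \<noteq> (\<lambda>S. 0)"
proof
  assume "L \<ge> 1" "ket0 \<theta> L i = (\<lambda>S. 0)"
  then have "ket0 \<theta> L i {1..<L} = 0" by simp
  then show False using ket0_val[OF \<open>L \<ge> 1\<close>, of \<theta> i] by simp
qed

lemma prod_eps: assumes "i \<in> idx L"
  shows "(\<Prod>k\<in>{1..<L}. complex_of_real (eps (i k))) = (-1) ^ (\<Sum>k\<in>{1..<L}. i k)"
proof -
  have "(\<Prod>k\<in>{1..<L}. complex_of_real (eps (i k))) = (\<Prod>k\<in>{1..<L}. (-1) ^ i k)"
  proof (rule prod.cong)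
    fix k assume "k \<in> {1..<L}"
    then have "i k \<in> {0,1}" using assms by (auto simp: idx_def)
    then show "complex_of_real (eps (i k)) = (-1) ^ i k" by (auto simp: eps_def)
  qed simp
  also have "\<dots> = (-1) ^ (\<Sum>k\<in>{1..<L}. i k)" by (simp add: power_sum)
  finally show ?thesis .
qed

lemma ket1_nz: assumes L: "L \<ge> 2" and i: "i \<in> idx L" and p: "p \<noteq> 0"
  shows "ket \<theta> L p i \<noteq> (\<lambda>S. 0)"
proof -
  define c where "c = complex_of_real (2 powr ((real L - 1) / 2)) * (\<i>/2 * cis(-\<theta>/2))^(L-1)"
  define P where "P = (\<Prod>k\<in>{1..<L}. complex_of_real (eps (i k)))"
  let ?h = "ket0 \<theta> L i"
  let ?S = "{2..<L}"
  have L1: "L \<ge> 1" using L by simp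
  have i1: "insert L ?S = {2..L}" using L by auto
  have i2: "insert 1 ?S = {1..<L}" using L by auto
  have jw1: "jw_sign L ?S = (-1) ^ (L - 2)"
  proof -
    have "{k\<in>?S. k < L} = ?S" by auto
    then show ?thesis unfolding jw_sign_def by simp
  qed
  have jw2: "jw_sign 1 ?S = 1"
  proof -
    have "{k\<in>?S. k < 1} = {}" by auto
    then show ?thesis unfolding jw_sign_def by (metis card.empty power_0)
  qed
  have a1: "ann L ?h ?S = (-1) ^ (L - 2) * (c * P)"
    unfolding ann_def using jw1 i1 ket0_val2[OF L1, of \<theta> i] by (simp add: c_def P_def)
  have a2: "cre L ?h ?S = 0" by (simp add: cre_def)
  have a3: "ann 1 ?h ?S = c"
    unfolding ann_def using jw2 i2 ket0_val[OF L1, of \<theta> i] by (simp add: c_def)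
  have a4: "cre 1 ?h ?S = 0" by (simp add: cre_def)
  have m1: "maj \<theta> (2*L) ?h ?S = - \<i> * cis (\<theta>/2) * ann L ?h ?S + \<i> * cis (-\<theta>/2) * cre L ?h ?S"
    by (simp add: maj_def)
  have m2: "maj \<theta> 1 ?h ?S = cis (\<theta>/2) * ann 1 ?h ?S + cis (-\<theta>/2) * cre 1 ?h ?S"
    by (simp add: maj_def)
  have pw: "(-1::complex) ^ (L - 2) = (-1) ^ L"
  proof -
    have "L = (L - 2) + 2" using L by simp
    then have "(-1::complex) ^ L = (-1) ^ (L - 2) * (-1)^2" by (metis power_add)
    then show ?thesis by simp
  qed
  have val: "ket \<theta> L p i ?S = c * cis (\<theta>/2) * (\<i>/2) * (complex_of_real (epsb L i) - (-1) ^ L * P)"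
    unfolding ket1_dgen[OF p] dgen_def m1 m2 a1 a2 a3 a4 pw by (simp add: algebra_simps)
  have P: "P = (-1) ^ (\<Sum>k\<in>{1..<L}. i k)" unfolding P_def using prod_eps[OF i] .
  have "complex_of_real (epsb L i) - (-1) ^ L * P \<noteq> 0"
    unfolding P epsb_def by (auto simp: power_add[symmetric])
  moreover have "c \<noteq> 0" by (simp add: c_def)
  ultimately have "ket \<theta> L p i ?S \<noteq> 0" unfolding val by simp
  then show ?thesis by auto
qed



lemma inner_scale_l: "fock_inner L (\<lambda>S. c * f S) g = cnj c * fock_inner L f g"
  unfolding fock_inner_def by (simp add: sum_distrib_left algebra_simps)

lemma inner_scale_r: "fock_inner L f (\<lambda>S. c * g S) = c * fock_inner L f g"
  unfolding fock_inner_def by (simp add: sum_distrib_left algebra_simps)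

lemma Wv_front: assumes j: "1 \<le> j" "j < L"
  shows "1 \<le> m \<Longrightarrow> m \<le> j \<Longrightarrow> \<exists>c U. Wv \<theta> L i m = (\<lambda>S. c * dgen \<theta> (2*j) (2*j+1) (eps (i j)) U S)"
proof (induction "j - m" arbitrary: m)
  case 0
  then have "m = j" by simp
  then show ?case using Wv_step[OF j(2), of \<theta> i] by (intro exI[of _ 1] exI[of _ "Wv \<theta> L i (Suc j)"]) auto
next
  case (Suc n)
  then have mj: "m < j" by simp
  have nn: "n = j - Suc m" using Suc.hyps(2) by simp
  obtain c U where cU: "Wv \<theta> L i (Suc m) = (\<lambda>S. c * dgen \<theta> (2*j) (2*j+1) (eps (i j)) U S)"
    using Suc.hyps(1)[OF nn] mj Suc.prems by auto
  have "Wv \<theta> L i m = dgen \<theta> (2*m) (2*m+1) (eps (i m)) (Wv \<theta> L i (Suc m))"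
    using Wv_step mj j by simp
  also have "\<dots> = (\<lambda>S. c * dgen \<theta> (2*m) (2*m+1) (eps (i m)) (dgen \<theta> (2*j) (2*j+1) (eps (i j)) U) S)"
    unfolding cU dgen_scale ..
  also have "\<dots> = (\<lambda>S. (- c) * dgen \<theta> (2*j) (2*j+1) (eps (i j)) (dgen \<theta> (2*m) (2*m+1) (eps (i m)) U) S)"
    using dgen_anti[of "2*m" "2*m+1" "2*j" "2*j+1" \<theta> "eps (i m)" "eps (i j)" U] mj Suc.prems
    by simp
  finally show ?case by blast
qed

lemma ket_front: assumes j: "1 \<le> j" "j < L"
  shows "\<exists>c U. ket \<theta> L p i = (\<lambda>S. c * dgen \<theta> (2*j) (2*j+1) (eps (i j)) U S)"
proof -
  have "\<exists>c U. Wv \<theta> L i 1 = (\<lambda>S. c * dgen \<theta> (2*j) (2*j+1) (eps (i j)) U S)"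
    using Wv_front[OF j, where m=1 and \<theta>=\<theta> and i=i] j by simp
  then obtain c U where cU: "Wv \<theta> L i 1 = (\<lambda>S. c * dgen \<theta> (2*j) (2*j+1) (eps (i j)) U S)"
    by blast
  define c0 where "c0 = complex_of_real (2 powr ((real L - 1) / 2))"
  have k0: "ket0 \<theta> L i = (\<lambda>S. (c0 * c) * dgen \<theta> (2*j) (2*j+1) (eps (i j)) U S)"
    unfolding ket0_Wv cU c0_def by (simp add: mult.assoc)
  show ?thesis
  proof (cases "p = 0")
    case True
    then show ?thesis using k0 by (auto simp: ket0_eq)
  next
    case False
    have "ket \<theta> L p i = dgen \<theta> (2*L) 1 (epsb L i) (\<lambda>S. (c0 * c) * dgen \<theta> (2*j) (2*j+1) (eps (i j)) U S)"
      unfolding ket1_dgen[OF False] k0 ..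
    also have "\<dots> = (\<lambda>S. (c0 * c) * dgen \<theta> (2*L) 1 (epsb L i) (dgen \<theta> (2*j) (2*j+1) (eps (i j)) U) S)"
      unfolding dgen_scale ..
    also have "\<dots> = (\<lambda>S. (- (c0 * c)) * dgen \<theta> (2*j) (2*j+1) (eps (i j)) (dgen \<theta> (2*L) 1 (epsb L i) U) S)"
      using dgen_anti[of "2*L" 1 "2*j" "2*j+1" \<theta> "epsb L i" "eps (i j)" U] j by simp
    finally show ?thesis by blast
  qed
qed

lemma inner_D: assumes j: "1 \<le> j" "j < L" and e: "\<epsilon> = 1 \<and> \<epsilon>' = -1 \<or> \<epsilon> = -1 \<and> \<epsilon>' = 1"
  shows "fock_inner L (\<lambda>S. c * dgen \<theta> (2*j) (2*j+1) \<epsilon> U S) (\<lambda>S. c' * dgen \<theta> (2*j) (2*j+1) \<epsilon>' U' S) = 0"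
proof -
  have r: "1 \<le> 2*j" "2*j \<le> 2*L" "1 \<le> 2*j+1" "2*j+1 \<le> 2*L" using j by auto
  have "fock_inner L (dgen \<theta> (2*j) (2*j+1) \<epsilon> U) (dgen \<theta> (2*j) (2*j+1) \<epsilon>' U')
     = fock_inner L (dgen \<theta> (2*j) (2*j+1) (-\<epsilon>') (dgen \<theta> (2*j) (2*j+1) \<epsilon> U)) U'"
    by (rule inner_dgen[OF r])
  also have "dgen \<theta> (2*j) (2*j+1) (-\<epsilon>') (dgen \<theta> (2*j) (2*j+1) \<epsilon> U) = (\<lambda>S. 0)"
  proof
    fix S
    have "-\<epsilon>' = \<epsilon>" "\<epsilon> * \<epsilon> = 1" using e by auto
    then show "dgen \<theta> (2*j) (2*j+1) (-\<epsilon>') (dgen \<theta> (2*j) (2*j+1) \<epsilon> U) S = 0"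
      using dgen_nil[of "2*j" "2*j+1" \<epsilon> \<theta> U S] j by simp
  qed
  also have "fock_inner L (\<lambda>S. 0) U' = 0" by (simp add: fock_inner_def)
  finally show ?thesis by (simp add: inner_scale_l inner_scale_r)
qed

lemma inner_same: assumes L: "L \<ge> 2" and i: "i \<in> idx L" and i': "i' \<in> idx L" and ne: "i \<noteq> i'"
  shows "fock_inner L (ket \<theta> L p i) (ket \<theta> L p' i') = 0"
proof -
  have "\<exists>j\<in>{1..<L}. i j \<noteq> i' j"
  proof (rule ccontr)
    assume a: "\<not> (\<exists>j\<in>{1..<L}. i j \<noteq> i' j)"
    have "i = i'"
    proof
      fix x show "i x = i' x"
      proof (cases "x \<in> {1..<L}")
        case True then show ?thesis using a by blast
      next
        case False then show ?thesis using i i' unfolding idx_def by simp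
      qed
    qed
    then show False using ne by simp
  qed
  then obtain j where j: "j \<in> {1..<L}" "i j \<noteq> i' j" by blast
  have v: "i j \<in> {0,1}" "i' j \<in> {0,1}" using i i' j(1) unfolding idx_def by auto
  have j1: "1 \<le> j" "j < L" using j by auto
  obtain c U where cU: "ket \<theta> L p i = (\<lambda>S. c * dgen \<theta> (2*j) (2*j+1) (eps (i j)) U S)"
    using ket_front[OF j1] by blast
  obtain c' U' where cU': "ket \<theta> L p' i' = (\<lambda>S. c' * dgen \<theta> (2*j) (2*j+1) (eps (i' j)) U' S)"
    using ket_front[OF j1] by blast
  have e: "eps (i j) = 1 \<and> eps (i' j) = -1 \<or> eps (i j) = -1 \<and> eps (i' j) = 1"
    using v j(2) by (auto simp: eps_def)
  show ?thesis unfolding cU cU' by (rule inner_D[OF j1 e])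
qed



lemma orth_all: assumes L: "L \<ge> 2" and p: "p \<in> {0,1} \<times> idx L" and q: "q \<in> {0,1} \<times> idx L" and ne: "p \<noteq> q"
  shows "fock_inner L (ket \<theta> L (fst p) (snd p)) (ket \<theta> L (fst q) (snd q)) = 0"
proof (cases "snd p = snd q")
  case False
  then show ?thesis using inner_same[OF L] p q by auto
next
  case True
  then have "fst p \<noteq> fst q" using ne by (metis prod.expand)
  then have "fst p = 0 \<longleftrightarrow> fst q \<noteq> 0" using p q by auto
  then show ?thesis using inner_par[of L] L by simp
qed

lemma nz_all: assumes L: "L \<ge> 2" and p: "p \<in> {0,1} \<times> idx L"
  shows "ket \<theta> L (fst p) (snd p) \<noteq> (\<lambda>S. 0)"
proof (cases "fst p = 0")
  case True
  then show ?thesis using ket0_nz[of L \<theta> "snd p"] L by (simp add: ket0_eq)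
next
  case False
  then show ?thesis using ket1_nz[OF L _ False] p by auto
qed

lemma fsum_apply: "(sum g A) x = (\<Sum>a\<in>A. g a x)"
proof (cases "finite A")
  case True
  then show ?thesis by (induction rule: finite_induct) auto
next
  case False
  then show ?thesis by simp
qed

lemma inner_self_nz: assumes "in_fock L f" "f \<noteq> (\<lambda>S. 0)"
  shows "fock_inner L f f \<noteq> 0"
proof -
  obtain S where S: "f S \<noteq> 0" using assms(2) by auto
  then have SP: "S \<in> Pow {1..L}" using assms(1) unfolding in_fock_def by auto
  have eq: "fock_inner L f f = complex_of_real (\<Sum>T\<in>Pow {1..L}. (cmod (f T))^2)"
    unfolding fock_inner_def of_real_sum
    by (intro sum.cong refl) (metis complex_norm_square mult.commute)
  have "(\<Sum>T\<in>Pow {1..L}. (cmod (f T))^2) > 0"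
    by (rule sum_pos2[OF _ SP]) (use S in auto)
  then show ?thesis unfolding eq by (metis of_real_eq_0_iff less_irrefl)
qed

lemma vs: "vector_space (\<lambda>(c::complex) (f::fock). (\<lambda>S. c * f S))"
  by unfold_locales (auto simp: fun_eq_iff algebra_simps)



interpretation fv: vector_space "\<lambda>(c::complex) (f::fock). (\<lambda>S. c * f S)"
  by (rule vs)

lemma card_idx: "card (idx L) = 2 ^ (L - 1)"
proof -
  define h where "h = (\<lambda>(A::nat set) (j::nat). if j \<in> A then (1::nat) else 0)"
  have img: "idx L = h ` Pow {1..<L}"
  proof
    show "idx L \<subseteq> h ` Pow {1..<L}"
    proof
      fix i assume i: "i \<in> idx L"
      have "i = h {j\<in>{1..<L}. i j = 1}"
      proof
        fix x show "i x = h {j\<in>{1..<L}. i j = 1} x"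
          using i unfolding idx_def h_def by (cases "x \<in> {1..<L}") auto
      qed
      then show "i \<in> h ` Pow {1..<L}" by blast
    qed
  next
    show "h ` Pow {1..<L} \<subseteq> idx L" unfolding idx_def h_def by auto
  qed
  have inj: "inj_on h (Pow {1..<L})"
  proof (rule inj_onI)
    fix A B assume "A \<in> Pow {1..<L}" "B \<in> Pow {1..<L}" "h A = h B"
    then have "\<forall>x. (x \<in> A) = (x \<in> B)" unfolding h_def by (metis one_neq_zero)
    then show "A = B" by blast
  qed
  have "card (idx L) = card (Pow {1..<L})" unfolding img by (rule card_image[OF inj])
  also have "\<dots> = 2 ^ (L - 1)" by (simp add: card_Pow)
  finally show ?thesis .
qed

lemma card_I: "L \<ge> 1 \<Longrightarrow> card ({0::nat,1} \<times> idx L) = 2 ^ L"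
proof -
  assume L: "L \<ge> 1"
  have "card ({0::nat,1} \<times> idx L) = 2 * 2 ^ (L - 1)" by (simp add: card_cartesian_product card_idx)
  also have "\<dots> = 2 ^ L" using L by (metis power_Suc Suc_diff_1 less_eq_Suc_le One_nat_def)
  finally show ?thesis .
qed

lemma fin_idx: "finite (idx L)"
proof (rule ccontr)
  assume "infinite (idx L)"
  then have "card (idx L) = 0" by simp
  then show False using card_idx[of L] by simp
qed

lemma spanning:
  assumes L: "L \<ge> 2" and f: "in_fock L f"
  shows "\<exists>c. f = (\<lambda>S. \<Sum>p\<in>{0,1} \<times> idx L. c p * ket \<theta> L (fst p) (snd p) S)"
proof -
  let ?I = "{0::nat,1} \<times> idx L"
  let ?k = "\<lambda>p. ket \<theta> L (fst p) (snd p)"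
  let ?B = "?k ` ?I"
  let ?e = "\<lambda>T. (\<lambda>S. if S = T then (1::complex) else 0)"
  let ?E = "?e ` Pow {1..L}"
  let ?V = "{f. in_fock L f}"
  have L1: "L \<ge> 1" using L by simp
  have finI: "finite ?I" using fin_idx by simp
  have orth: "\<And>p q. p \<in> ?I \<Longrightarrow> q \<in> ?I \<Longrightarrow> p \<noteq> q \<Longrightarrow> fock_inner L (?k p) (?k q) = 0"
    by (rule orth_all[OF L])
  have selfnz: "\<And>p. p \<in> ?I \<Longrightarrow> fock_inner L (?k p) (?k p) \<noteq> 0"
    by (rule inner_self_nz[OF ket_in_fock[OF L1] nz_all[OF L]])
  have inj: "inj_on ?k ?I"
  proof (rule inj_onI)
    fix p q assume pq: "p \<in> ?I" "q \<in> ?I" "?k p = ?k q"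
    show "p = q"
    proof (rule ccontr)
      assume "p \<noteq> q"
      then have "fock_inner L (?k p) (?k q) = 0" by (rule orth[OF pq(1,2)])
      then show False using selfnz[OF pq(1)] pq(3) by simp
    qed
  qed
  have cardB: "card ?B = 2 ^ L" using card_image[OF inj] card_I[OF L1] by simp
  have VE: "?V \<subseteq> fv.span ?E"
  proof
    fix g assume "g \<in> ?V"
    then have g: "in_fock L g" by simp
    have "g = (\<Sum>T\<in>Pow {1..L}. (\<lambda>S. g T * ?e T S))"
    proof
      fix S
      have "(\<Sum>T\<in>Pow {1..L}. (\<lambda>S. g T * ?e T S)) S = (\<Sum>T\<in>Pow {1..L}. g T * ?e T S)"
        by (rule fsum_apply)
      also have "\<dots> = (if S \<in> Pow {1..L} then g S else 0)"
        by (simp add: if_distrib cong: if_cong)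
      also have "\<dots> = g S" using g unfolding in_fock_def by auto
      finally show "g S = (\<Sum>T\<in>Pow {1..L}. (\<lambda>S. g T * ?e T S)) S" by simp
    qed
    also have "\<dots> \<in> fv.span ?E"
      by (intro fv.span_sum fv.span_scale fv.span_base) auto
    finally show "g \<in> fv.span ?E" .
  qed
  have cardE: "card ?E \<le> 2 ^ L"
  proof -
    have "card ?E \<le> card (Pow {1..L})" by (rule card_image_le) simp
    also have "\<dots> = 2 ^ L" by (simp add: card_Pow)
    finally show ?thesis .
  qed
  have BV: "?B \<subseteq> ?V" using ket_in_fock[OF L1] by auto
  have indep: "fv.independent ?B"
  proof (rule fv.independent_if_scalars_zero)
    show "finite ?B" using finI by simp
  next
    fix u x assume sum0: "(\<Sum>x\<in>?B. (\<lambda>S. u x * x S)) = 0" and x: "x \<in> ?B"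
    obtain p where p: "p \<in> ?I" "x = ?k p" using x by blast
    have "0 = fock_inner L x (\<Sum>y\<in>?B. (\<lambda>S. u y * y S))"
      unfolding sum0 by (simp add: fock_inner_def)
    also have "\<dots> = (\<Sum>y\<in>?B. u y * fock_inner L x y)"
      unfolding fock_inner_def fsum_apply
      by (simp add: sum_distrib_left algebra_simps) (rule sum.swap)
    also have "\<dots> = u x * fock_inner L x x + (\<Sum>y\<in>?B - {x}. u y * fock_inner L x y)"
      using finI x by (simp add: sum.remove)
    also have "(\<Sum>y\<in>?B - {x}. u y * fock_inner L x y) = 0"
    proof (rule sum.neutral, rule ballI)
      fix y assume y: "y \<in> ?B - {x}"
      then obtain q where q: "q \<in> ?I" "y = ?k q" by blast
      then have "p \<noteq> q" using p y by auto
      then have "fock_inner L x y = 0" using orth p q by simp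
      then show "u y * fock_inner L x y = 0" by simp
    qed
    finally have "u x * fock_inner L x x = 0" by simp
    then show "u x = 0" using selfnz p by simp
  qed
  have "f \<in> fv.span ?B"
  proof (rule ccontr)
    assume nf: "f \<notin> fv.span ?B"
    have "f \<notin> ?B"
    proof
      assume "f \<in> ?B"
      then have "f \<in> fv.span ?B" by (rule fv.span_base)
      with nf show False by contradiction
    qed
    have ind2: "fv.independent (insert f ?B)" by (rule fv.independent_insertI[OF nf indep])
    have "insert f ?B \<subseteq> ?V" using BV f by simp
    then have sub: "insert f ?B \<subseteq> fv.span ?E" using VE by (rule subset_trans)
    have fE: "finite ?E" by simp
    have "card (insert f ?B) \<le> card ?E"
      using fv.independent_span_bound[OF fE ind2 sub] by (rule conjunct2)
    moreover have "card (insert f ?B) = Suc (2 ^ L)"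
      using card_insert_disjoint[OF finite_imageI[OF finI] \<open>f \<notin> ?B\<close>] cardB by simp
    ultimately show False using cardE by simp
  qed
  then have "f \<in> range (\<lambda>u. \<Sum>v\<in>?B. (\<lambda>S. u v * v S))"
    by (simp only: fv.span_finite[OF finite_imageI[OF finI]])
  then obtain u where u: "f = (\<Sum>v\<in>?B. (\<lambda>S. u v * v S))"
    by (auto simp only: image_iff)
  have "f = (\<lambda>S. \<Sum>p\<in>?I. u (?k p) * ?k p S)"
  proof
    fix S
    have "f S = (\<Sum>v\<in>?B. u v * v S)" unfolding u fsum_apply ..
    also have "\<dots> = (\<Sum>p\<in>?I. u (?k p) * ?k p S)"
      by (rule sum.reindex[OF inj, unfolded comp_def])
    finally show "f S = (\<Sum>p\<in>?I. u (?k p) * ?k p S)" .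
  qed
  then show ?thesis by (intro exI[of _ "\<lambda>p. u (?k p)"])
qed

theorem proposition3p6:
  fixes L :: nat and \<theta> :: real
  assumes "L \<ge> 2"
  shows "(\<forall>p\<in>{0,1} \<times> idx L. in_fock L (ket \<theta> L (fst p) (snd p)))
       \<and> (\<forall>p\<in>{0,1} \<times> idx L. ket \<theta> L (fst p) (snd p) \<noteq> (\<lambda>S. 0))
       \<and> (\<forall>p\<in>{0,1} \<times> idx L. \<forall>q\<in>{0,1} \<times> idx L. p \<noteq> q \<longrightarrow>
             fock_inner L (ket \<theta> L (fst p) (snd p)) (ket \<theta> L (fst q) (snd q)) = 0)
       \<and> (\<forall>f. in_fock L f \<longrightarrow> (\<exists>c. f = (\<lambda>S. \<Sum>p\<in>{0,1} \<times> idx L. c p * ket \<theta> L (fst p) (snd p) S)))"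
proof (intro conjI ballI allI impI)
  have L1: "L \<ge> 1" using assms by simp
  show "in_fock L (ket \<theta> L (fst p) (snd p))" for p using ket_in_fock[OF L1] .
  show "ket \<theta> L (fst p) (snd p) \<noteq> (\<lambda>S. 0)" if "p \<in> {0,1} \<times> idx L" for p
    using nz_all[OF assms that] .
  show "fock_inner L (ket \<theta> L (fst p) (snd p)) (ket \<theta> L (fst q) (snd q)) = 0"
    if "p \<in> {0,1} \<times> idx L" "q \<in> {0,1} \<times> idx L" "p \<noteq> q" for p q
    using orth_all[OF assms that] .
  show "\<exists>c. f = (\<lambda>S. \<Sum>p\<in>{0,1} \<times> idx L. c p * ket \<theta> L (fst p) (snd p) S)" if "in_fock L f" for f
    using spanning[OF assms that] .
qed

end
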